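(* Fix $c\ge0$ and consider $\partial_t u=\partial_{xx}u-c\partial_x u$ ($x>0$), $\partial_x u=g(u)$ ($x=0$), where $g$ satisfies: there is $y_1>0$ with $g(0)=g(y_1)=0$ and $g(y)<0$ for $y\in(0,y_1)$. Then for all sufficiently large $k$ there exist $T_k>0$ and a function $\overline u_k\in C([0,T_k],BUC([0,\infty)))$ such that: (1) $\overline u_k(\cdot,0)=1/k^2$; (2) $\overline u_k$ is a super-solution of the problem for $t\in(0,T_k]$; (3) $\overline u_k(0,T_k)=1/k$; (4) $T_k\to\infty$ as $k\to\infty$.
   Context: $g\in C^2(\mathbb{R},\mathbb{R})$ is $2\pi$-periodic. A super-solution on a time interval $(s,T)$ is a function $\overline u(x,t)$, continuous for $s\le t\le T$, satisfying classically $\partial_t\overline u\ge\partial_{xx}\overline u-c\partial_x\overline u$ for $x>0$, $t\in(s,T)$, and $\partial_x\overline u\le g(\overline u)$ at $x=0$, $t\in(s,T)$. *)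

theory Defs
  imports "HOL-Analysis.Analysis"
begin

text \<open>Functions u :: real => real => real are written u x t (space x, time t).\<close>

definition C2_fun :: "(real \<Rightarrow> real) \<Rightarrow> bool" where
  "C2_fun g \<longleftrightarrow> (\<forall>y. g differentiable (at y)) \<and> (\<forall>y. deriv g differentiable (at y))
     \<and> continuous_on UNIV (deriv (deriv g))"

definition super_solution ::
  "real \<Rightarrow> (real \<Rightarrow> real) \<Rightarrow> (real \<Rightarrow> real \<Rightarrow> real) \<Rightarrow> real \<Rightarrow> real \<Rightarrow> bool" where
  "super_solution c g u s T \<longleftrightarrow>
     continuous_on ({0..} \<times> {s..T}) (\<lambda>(x,t). u x t) \<and>
     (\<forall>t\<in>{s<..<T}. \<forall>x>0.
        (\<forall>y>0. (\<lambda>z. u z t) differentiable (at y)) \<and>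
        deriv (\<lambda>z. u z t) differentiable (at x) \<and>
        (\<lambda>\<tau>. u x \<tau>) differentiable (at t) \<and>
        deriv (\<lambda>\<tau>. u x \<tau>) t \<ge>
          deriv (deriv (\<lambda>z. u z t)) x - c * deriv (\<lambda>z. u z t) x) \<and>
     (\<forall>t\<in>{s<..<T}. \<exists>d. ((\<lambda>z. u z t) has_real_derivative d) (at 0 within {0..})
        \<and> d \<le> g (u 0 t))"

definition in_C_BUC :: "real \<Rightarrow> (real \<Rightarrow> real \<Rightarrow> real) \<Rightarrow> bool" where
  "in_C_BUC T u \<longleftrightarrow>
     (\<forall>t\<in>{0..T}. bounded ((\<lambda>x. u x t) ` {0..}) \<and> uniformly_continuous_on {0..} (\<lambda>x. u x t)) \<and>
     (\<forall>t0\<in>{0..T}. \<forall>\<epsilon>>0. \<exists>\<delta>>0. \<forall>t\<in>{0..T}. \<bar>t - t0\<bar> < \<delta> \<longrightarrow>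
        (\<forall>x\<ge>0. \<bar>u x t - u x t0\<bar> \<le> \<epsilon>))"

end

theory Submission
  imports Defs
begin


lemma g_lower:
  assumes "C2_fun g" "g 0 = 0"
  shows "\<exists>L\<ge>1. \<forall>y\<in>{0..1}. g y \<ge> - L * y"
proof -
  have dg: "\<And>y. DERIV g y :> deriv g y"
    using assms(1) unfolding C2_fun_def by (simp add: DERIV_deriv_iff_real_differentiable)
  have "\<And>y. isCont (deriv g) y"
    using assms(1) unfolding C2_fun_def by (simp add: differentiable_imp_continuous_within)
  hence "continuous_on {0..1} (deriv g)" by (simp add: continuous_at_imp_continuous_on)
  hence "compact (deriv g ` {0..1})" by (rule compact_continuous_image) simp
  hence "bounded (deriv g ` {0..1})" by (rule compact_imp_bounded)
  then obtain B where B: "\<And>y. y \<in> {0..1} \<Longrightarrow> \<bar>deriv g y\<bar> \<le> B"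
    unfolding bounded_iff by (metis atLeastAtMost_iff image_eqI real_norm_def)
  define L where "L = max 1 B"
  have "\<forall>y\<in>{0..1}. g y \<ge> - L * y"
  proof
    fix y :: real assume y: "y \<in> {0..1}"
    show "g y \<ge> - L * y"
    proof (cases "y = 0")
      case True thus ?thesis using assms(2) by simp
    next
      case False
      hence "0 < y" using y by simp
      from MVT2[OF this dg] obtain z where z: "0 < z" "z < y" "g y - g 0 = (y - 0) * deriv g z" by blast
      have "\<bar>deriv g z\<bar> \<le> L" using B[of z] z y unfolding L_def by auto
      hence "deriv g z \<ge> - L" by simp
      hence "y * deriv g z \<ge> y * (- L)" using \<open>0 < y\<close> by (intro mult_left_mono) auto
      thus ?thesis using z assms(2) by (simp add: mult.commute)
    qed
  qed
  thus ?thesis unfolding L_def by (intro exI[of _ "max 1 B"]) auto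
qed

lemma sqrt_lip_x:
  fixes x y s :: real assumes "s \<ge> 0"
  shows "\<bar>sqrt (x\<^sup>2 + s) - sqrt (y\<^sup>2 + s)\<bar> \<le> \<bar>x - y\<bar>"
proof -
  have e: "\<And>a. sqrt (a\<^sup>2 + s) = norm (a, sqrt s)" using assms by (simp add: norm_Pair)
  have "\<bar>norm (x, sqrt s) - norm (y, sqrt s)\<bar> \<le> norm ((x, sqrt s) - (y, sqrt s))"
    by (rule norm_triangle_ineq3)
  also have "\<dots> = \<bar>x - y\<bar>" by (simp add: norm_Pair)
  finally show ?thesis by (simp add: e)
qed

lemma sqrt_lip_s:
  fixes x a b :: real assumes "a \<ge> 0" "b \<ge> 0"
  shows "\<bar>sqrt (x\<^sup>2 + a) - sqrt (x\<^sup>2 + b)\<bar> \<le> sqrt \<bar>a - b\<bar>"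
proof -
  have e: "\<And>a. a \<ge> 0 \<Longrightarrow> sqrt (x\<^sup>2 + a) = norm (x, sqrt a)" by (simp add: norm_Pair)
  have "\<bar>norm (x, sqrt a) - norm (x, sqrt b)\<bar> \<le> norm ((x, sqrt a) - (x, sqrt b))"
    by (rule norm_triangle_ineq3)
  also have "\<dots> = \<bar>sqrt a - sqrt b\<bar>" by (simp add: norm_Pair)
  also have "\<dots> \<le> sqrt \<bar>a - b\<bar>"
  proof (cases "a \<ge> b")
    case True
    have "sqrt (b + (a - b)) \<le> sqrt b + sqrt (a - b)" using assms True by (intro sqrt_add_le_add_sqrt) auto
    moreover have "sqrt b \<le> sqrt a" using True by simp
    ultimately show ?thesis using True by simp
  next
    case False
    have "sqrt (a + (b - a)) \<le> sqrt a + sqrt (b - a)" using assms False by (intro sqrt_add_le_add_sqrt) auto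
    moreover have "sqrt a \<le> sqrt b" using False by simp
    ultimately show ?thesis using False by simp
  qed
  finally show ?thesis using assms by (simp add: e)
qed

lemma h_bounds:
  fixes x s :: real assumes "x \<ge> 0" "s \<ge> 0"
  shows "0 \<le> sqrt (x\<^sup>2 + s) - x" "sqrt (x\<^sup>2 + s) - x \<le> sqrt s"
proof -
  show "0 \<le> sqrt (x\<^sup>2 + s) - x" using assms
    by (metis diff_ge_0_iff_ge le_add_same_cancel1 real_sqrt_abs real_sqrt_le_mono abs_of_nonneg)
  have "sqrt (x\<^sup>2 + s) \<le> sqrt (x\<^sup>2) + sqrt s" using assms by (intro sqrt_add_le_add_sqrt) auto
  thus "sqrt (x\<^sup>2 + s) - x \<le> sqrt s" using assms by simp
qed

lemma key_ineq:
  fixes L c \<sigma> m D \<tau> \<mu> t x :: real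
  assumes L: "L \<ge> 1" and c: "c \<ge> 0" and \<sigma>: "\<sigma> = 1/(4*L\<^sup>2)" and m: "m = 2*L"
    and D: "D = 1 + c/(2*L)" and \<tau>: "\<tau> = \<sigma>/(8*D)" and \<mu>: "\<mu> = 8*L\<^sup>2*D"
    and t: "t > 0" and x: "x > 0"
  shows "m*(\<sigma>*t/(t+\<tau>)/(sqrt (x\<^sup>2 + \<sigma>*t/(t+\<tau>)))^3) - c*(m*(x/sqrt (x\<^sup>2 + \<sigma>*t/(t+\<tau>)) - 1))
     \<le> \<mu>*(1 + m*(sqrt (x\<^sup>2 + \<sigma>*t/(t+\<tau>)) - x)) + m*(\<sigma>*\<tau>/(t+\<tau>)\<^sup>2)/(2* sqrt (x\<^sup>2 + \<sigma>*t/(t+\<tau>)))"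
proof -
  define s where "s = \<sigma>*t/(t+\<tau>)"
  define r where "r = sqrt (x\<^sup>2 + s)"
  define s' where "s' = \<sigma>*\<tau>/(t+\<tau>)\<^sup>2"
  have \<sigma>pos: "\<sigma> > 0" using L \<sigma> by simp
  have Dpos: "D \<ge> 1" using D c L by simp
  have \<tau>pos: "\<tau> > 0" using \<sigma>pos Dpos \<tau> by simp
  have spos: "s > 0" unfolding s_def using \<sigma>pos \<tau>pos t by simp
  have sle: "s \<le> \<sigma>" unfolding s_def using \<sigma>pos \<tau>pos t by (simp add: field_simps)
  have r2: "r\<^sup>2 = x\<^sup>2 + s" unfolding r_def using spos by simp
  have rpos: "r > 0" unfolding r_def using spos by (simp add: add_nonneg_pos)
  have rge: "r \<ge> sqrt s" unfolding r_def by simp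
  have hb: "0 \<le> r - x" "r - x \<le> sqrt s" using h_bounds[of x s] x spos unfolding r_def by auto
  have sqs: "sqrt \<sigma> = 1/(2*L)" using L \<sigma> by (simp add: real_sqrt_divide real_sqrt_mult)
  have sqsle: "sqrt s \<le> 1/(2*L)" using sle sqs by (metis real_sqrt_le_mono)
  have t1: "m*(s/r^3) \<le> m/r"
  proof -
    have "s \<le> r\<^sup>2" using r2 by simp
    hence "s/r^3 \<le> r\<^sup>2/r^3" using rpos by (simp add: divide_right_mono)
    also have "\<dots> = 1/r" using rpos by (simp add: power2_eq_square power3_eq_cube)
    finally have "s/r^3 \<le> 1/r" .
    hence "m*(s/r^3) \<le> m*(1/r)" using m L by (intro mult_left_mono) auto
    thus ?thesis by simp
  qed
  have t2: "- c*(m*(x/r - 1)) \<le> c*m/(2*L*r)"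
  proof -
    have "- c*(m*(x/r - 1)) = c*m*((r - x)/r)" using rpos by (simp add: field_simps)
    also have "\<dots> \<le> c*m*((1/(2*L))/r)"
      using hb sqsle rpos c m L by (intro mult_left_mono divide_right_mono) auto
    finally show ?thesis by simp
  qed
  have rhs: "m*(s/r^3) - c*(m*(x/r - 1)) \<le> m*D/r"
  proof -
    have e: "m*D = m + c*m/(2*L)" using D by (simp add: algebra_simps)
    have "m*D/r = m/r + c*m/(2*L*r)" unfolding e by (simp add: add_divide_distrib)
    thus ?thesis using t1 t2 by simp
  qed
  have main: "\<mu>*r + m* s'/2 \<ge> m*D"
  proof (cases "t \<le> \<tau>")
    case True
    have "(t+\<tau>)\<^sup>2 \<le> (2*\<tau>)\<^sup>2" using True t \<tau>pos by (intro power_mono) auto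
    hence "s' \<ge> \<sigma>*\<tau>/(2*\<tau>)\<^sup>2" unfolding s'_def using \<sigma>pos \<tau>pos t
      by (intro divide_left_mono) (auto intro!: mult_pos_pos)
    also have "\<sigma>*\<tau>/(2*\<tau>)\<^sup>2 = 2*D" using \<tau> \<tau>pos \<sigma>pos Dpos by (simp add: power2_eq_square field_simps)
    finally have "m* s'/2 \<ge> m*D" using m L by simp
    moreover have "\<mu>*r \<ge> 0" using \<mu> Dpos rpos by simp
    ultimately show ?thesis by linarith
  next
    case False
    have "s \<ge> \<sigma>/2" unfolding s_def using False \<sigma>pos \<tau>pos t by (simp add: field_simps)
    hence "sqrt s \<ge> sqrt (1/(16*L\<^sup>2))" using \<sigma> L by (intro real_sqrt_le_mono) (simp add: field_simps)
    also have "sqrt (1/(16*L\<^sup>2)) = 1/(4*L)" using L by (simp add: real_sqrt_divide real_sqrt_mult)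
    finally have "r \<ge> 1/(4*L)" using rge by simp
    hence "\<mu>*r \<ge> \<mu>*(1/(4*L))" using \<mu> Dpos by (intro mult_left_mono) auto
    also have "\<mu>*(1/(4*L)) = m*D" using \<mu> m L by (simp add: power2_eq_square field_simps)
    finally have "\<mu>*r \<ge> m*D" .
    moreover have "m* s'/2 \<ge> 0" unfolding s'_def using m L \<sigma>pos \<tau>pos by simp
    ultimately show ?thesis by linarith
  qed
  have lhs: "\<mu>*(1 + m*(r - x)) + m* s'/(2*r) \<ge> \<mu> + m* s'/(2*r)"
    using hb m L \<mu> Dpos by simp
  have "m*D/r \<le> \<mu> + m* s'/(2*r)"
  proof -
    have "\<mu> + m* s'/(2*r) = (\<mu>*r + m* s'/2)/r" using rpos by (simp add: field_simps)
    thus ?thesis using main rpos by (simp add: divide_right_mono)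
  qed
  hence "m*(s/r^3) - c*(m*(x/r - 1)) \<le> \<mu>*(1 + m*(r - x)) + m* s'/(2*r)" using rhs lhs by linarith
  thus ?thesis unfolding r_def s_def s'_def .
qed



definition sf :: "real \<Rightarrow> real \<Rightarrow> real \<Rightarrow> real" where
  "sf \<sigma> \<tau> t = \<sigma> * t / (t + \<tau>)"

definition UU :: "real \<Rightarrow> real \<Rightarrow> real \<Rightarrow> real \<Rightarrow> real \<Rightarrow> real \<Rightarrow> real \<Rightarrow> real" where
  "UU \<epsilon> \<mu> m \<sigma> \<tau> x t = \<epsilon> * exp (\<mu> * t) * (1 + m * (sqrt (x\<^sup>2 + sf \<sigma> \<tau> t) - x))"

lemma dx:
  assumes "s > 0"
  shows "((\<lambda>z. A * (1 + m * (sqrt (z\<^sup>2 + s) - z))) has_real_derivative A * m * (z / sqrt (z\<^sup>2 + s) - 1)) (at z)"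
proof -
  have p: "z\<^sup>2 + s > 0" using assms by (simp add: add_nonneg_pos)
  show ?thesis
    using p by (auto intro!: derivative_eq_intros simp: field_simps)
qed

lemma dxx:
  assumes "s > 0"
  shows "((\<lambda>z. A * m * (z / sqrt (z\<^sup>2 + s) - 1)) has_real_derivative A * m * (s / (sqrt (z\<^sup>2 + s))^3)) (at z)"
proof -
  have p: "z\<^sup>2 + s > 0" using assms by (simp add: add_nonneg_pos)
  have q: "sqrt (z\<^sup>2 + s) > 0" using p by simp
  show ?thesis
    using p q apply (auto intro!: derivative_eq_intros)
  proof -
    have k: "\<And>r. r > 0 \<Longrightarrow> r^2 = z\<^sup>2 + s \<Longrightarrow> (r - z * (inverse r * z)) * (A * m) / (z\<^sup>2 + s) = A * m * s / r ^ 3"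
      by (simp add: field_simps power2_eq_square power3_eq_cube)
    show "(sqrt (z\<^sup>2 + s) - z * (inverse (sqrt (z\<^sup>2 + s)) * z)) * (A * m) / (z\<^sup>2 + s) = A * m * s / sqrt (z\<^sup>2 + s) ^ 3"
      using p q by (intro k) auto
  qed
qed

lemma dt:
  assumes "t > 0" "\<tau> > 0" "\<sigma> > 0"
  shows "((\<lambda>t. UU \<epsilon> \<mu> m \<sigma> \<tau> x t) has_real_derivative
     \<epsilon> * exp (\<mu> * t) * (\<mu> * (1 + m * (sqrt (x\<^sup>2 + sf \<sigma> \<tau> t) - x)) + m * (\<sigma> * \<tau> / (t + \<tau>)\<^sup>2) / (2 * sqrt (x\<^sup>2 + sf \<sigma> \<tau> t)))) (at t)"
proof -
  have p: "x\<^sup>2 + sf \<sigma> \<tau> t > 0" using assms unfolding sf_def by (simp add: add_nonneg_pos)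
  have tt: "t + \<tau> \<noteq> 0" using assms by simp
  show ?thesis unfolding UU_def sf_def
    using p tt apply (auto intro!: derivative_eq_intros simp: sf_def)
    apply (simp add: field_simps power2_eq_square)
    done
qed

lemma sf_bounds:
  assumes "\<sigma> > 0" "\<tau> > 0" "t \<ge> 0"
  shows "0 \<le> sf \<sigma> \<tau> t" "sf \<sigma> \<tau> t \<le> \<sigma>"
  using assms unfolding sf_def by (auto simp: field_simps)

lemma sf_mono:
  assumes "\<sigma> > 0" "\<tau> > 0" "0 \<le> t" "t \<le> T"
  shows "sf \<sigma> \<tau> t \<le> sf \<sigma> \<tau> T"
proof -
  have "\<sigma>*t*(T+\<tau>) \<le> \<sigma>*T*(t+\<tau>)"
  proof -
    have "\<sigma>*t*\<tau> \<le> \<sigma>*T*\<tau>" using assms by (intro mult_right_mono mult_left_mono) auto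
    thus ?thesis by (simp add: algebra_simps)
  qed
  thus ?thesis unfolding sf_def using assms by (simp add: divide_simps)
qed

lemma UU_cont:
  assumes "\<tau> > 0"
  shows "continuous_on ({0..} \<times> {0..T}) (\<lambda>(x,t). UU \<epsilon> \<mu> m \<sigma> \<tau> x t)"
proof -
  have "continuous_on ({0..} \<times> {0..T})
    (\<lambda>p. \<epsilon> * exp (\<mu> * snd p) * (1 + m * (sqrt ((fst p)\<^sup>2 + \<sigma> * snd p / (snd p + \<tau>)) - fst p)))"
    using assms by (intro continuous_intros) (auto simp: add_pos_nonneg)
  moreover have "(\<lambda>(x,t). UU \<epsilon> \<mu> m \<sigma> \<tau> x t) =
    (\<lambda>p. \<epsilon> * exp (\<mu> * snd p) * (1 + m * (sqrt ((fst p)\<^sup>2 + \<sigma> * snd p / (snd p + \<tau>)) - fst p)))"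
    by (auto simp: fun_eq_iff UU_def sf_def)
  ultimately show ?thesis by simp
qed

lemma UU_BUC:
  assumes "\<epsilon> > 0" "m > 0" "\<sigma> > 0" "\<tau> > 0"
  shows "in_C_BUC T (UU \<epsilon> \<mu> m \<sigma> \<tau>)"
  unfolding in_C_BUC_def
proof (intro conjI ballI allI impI)
  fix t assume t: "t \<in> {0..T}"
  define s where "s = sf \<sigma> \<tau> t"
  define A where "A = \<epsilon> * exp (\<mu> * t)"
  have sb: "0 \<le> s" "s \<le> \<sigma>" unfolding s_def using sf_bounds[of \<sigma> \<tau> t] assms t by auto
  have Apos: "A > 0" unfolding A_def using assms by simp
  have f: "(\<lambda>x. UU \<epsilon> \<mu> m \<sigma> \<tau> x t) = (\<lambda>x. A * (1 + m * (sqrt (x\<^sup>2 + s) - x)))"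
    by (simp add: fun_eq_iff UU_def A_def s_def)
  show "bounded ((\<lambda>x. UU \<epsilon> \<mu> m \<sigma> \<tau> x t) ` {0..})"
    unfolding bounded_iff f
  proof (intro exI ballI)
    fix y assume "y \<in> (\<lambda>x. A * (1 + m * (sqrt (x\<^sup>2 + s) - x))) ` {0..}"
    then obtain x where x: "x \<ge> 0" and y: "y = A * (1 + m * (sqrt (x\<^sup>2 + s) - x))" by auto
    have h: "0 \<le> sqrt (x\<^sup>2 + s) - x" "sqrt (x\<^sup>2 + s) - x \<le> sqrt s" using h_bounds[of x s] x sb by auto
    have "0 \<le> y" unfolding y using h Apos assms by simp
    moreover have "y \<le> A * (1 + m * sqrt s)" unfolding y using h Apos assms
      by (intro mult_left_mono add_left_mono) auto
    ultimately show "norm y \<le> A * (1 + m * sqrt s)" by simp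
  qed
  show "uniformly_continuous_on {0..} (\<lambda>x. UU \<epsilon> \<mu> m \<sigma> \<tau> x t)"
    unfolding f
  proof (rule lipschitz_on_uniformly_continuous, rule lipschitz_onI)
    fix x y :: real assume "x \<in> {0..}" "y \<in> {0..}"
    have "dist (A * (1 + m * (sqrt (x\<^sup>2 + s) - x))) (A * (1 + m * (sqrt (y\<^sup>2 + s) - y)))
       = A * m * \<bar>(sqrt (x\<^sup>2 + s) - sqrt (y\<^sup>2 + s)) - (x - y)\<bar>"
    proof -
      have "A * (1 + m * (sqrt (x\<^sup>2 + s) - x)) - A * (1 + m * (sqrt (y\<^sup>2 + s) - y))
         = (A * m) * ((sqrt (x\<^sup>2 + s) - sqrt (y\<^sup>2 + s)) - (x - y))" by (simp add: algebra_simps)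
      thus ?thesis using Apos assms by (simp add: dist_real_def abs_mult)
    qed
    also have "\<dots> \<le> A * m * (2 * \<bar>x - y\<bar>)"
    proof -
      have "\<bar>(sqrt (x\<^sup>2 + s) - sqrt (y\<^sup>2 + s)) - (x - y)\<bar> \<le> 2 * \<bar>x - y\<bar>"
        using sqrt_lip_x[of s x y] sb by (smt (verit))
      thus ?thesis using Apos assms by (intro mult_left_mono) auto
    qed
    finally show "dist (A * (1 + m * (sqrt (x\<^sup>2 + s) - x))) (A * (1 + m * (sqrt (y\<^sup>2 + s) - y)))
       \<le> (A * m * 2) * dist x y" by (simp add: dist_real_def)
  next
    show "0 \<le> A * m * 2" using Apos assms by simp
  qed
next
  fix t0 e :: real assume t0: "t0 \<in> {0..T}" and e: "e > 0"
  define F where "F = (\<lambda>t. \<epsilon> * \<bar>exp (\<mu> * t) - exp (\<mu> * t0)\<bar> * (1 + m * sqrt \<sigma>)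
       + \<epsilon> * exp (\<mu> * t0) * m * sqrt \<bar>\<sigma> * t / (t + \<tau>) - \<sigma> * t0 / (t0 + \<tau>)\<bar>)"
  have "isCont F t0" unfolding F_def using t0 assms by (intro continuous_intros) auto
  moreover have "F t0 = 0" unfolding F_def by simp
  ultimately obtain d where d: "d > 0" "\<And>t. t \<noteq> t0 \<Longrightarrow> \<bar>t - t0\<bar> < d \<Longrightarrow> \<bar>F t\<bar> < e"
    using e unfolding isCont_def LIM_eq by force
  have bound: "\<bar>UU \<epsilon> \<mu> m \<sigma> \<tau> x t - UU \<epsilon> \<mu> m \<sigma> \<tau> x t0\<bar> \<le> F t" if t: "t \<in> {0..T}" and x: "x \<ge> 0" for t x
  proof -
    define s where "s = sf \<sigma> \<tau> t"
    define s0 where "s0 = sf \<sigma> \<tau> t0"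
    have sb: "0 \<le> s" "s \<le> \<sigma>" unfolding s_def using sf_bounds[of \<sigma> \<tau> t] assms t by auto
    have sb0: "0 \<le> s0" "s0 \<le> \<sigma>" unfolding s0_def using sf_bounds[of \<sigma> \<tau> t0] assms t0 by auto
    define h where "h = sqrt (x\<^sup>2 + s) - x"
    define h0 where "h0 = sqrt (x\<^sup>2 + s0) - x"
    have hb: "0 \<le> h" "h \<le> sqrt s" using h_bounds[of x s] x sb unfolding h_def by auto
    have hs: "sqrt s \<le> sqrt \<sigma>" using sb by simp
    have hh: "\<bar>h - h0\<bar> \<le> sqrt \<bar>s - s0\<bar>" unfolding h_def h0_def using sqrt_lip_s[of s s0 x] sb sb0 by simp
    have eq: "UU \<epsilon> \<mu> m \<sigma> \<tau> x t - UU \<epsilon> \<mu> m \<sigma> \<tau> x t0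
      = \<epsilon> * (exp (\<mu> * t) - exp (\<mu> * t0)) * (1 + m * h) + \<epsilon> * exp (\<mu> * t0) * m * (h - h0)"
      unfolding UU_def h_def h0_def s_def s0_def by (simp add: algebra_simps)
    have "\<bar>\<epsilon> * (exp (\<mu> * t) - exp (\<mu> * t0)) * (1 + m * h)\<bar> \<le> \<epsilon> * \<bar>exp (\<mu> * t) - exp (\<mu> * t0)\<bar> * (1 + m * sqrt \<sigma>)"
    proof -
      have "h \<le> sqrt \<sigma>" using hb hs by linarith
      thus ?thesis using hb assms by (auto simp: abs_mult intro!: mult_left_mono mult_mono)
    qed
    moreover have "\<bar>\<epsilon> * exp (\<mu> * t0) * m * (h - h0)\<bar> \<le> \<epsilon> * exp (\<mu> * t0) * m * sqrt \<bar>s - s0\<bar>"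
      using hh assms by (auto simp: abs_mult intro!: mult_left_mono)
    ultimately have "\<bar>UU \<epsilon> \<mu> m \<sigma> \<tau> x t - UU \<epsilon> \<mu> m \<sigma> \<tau> x t0\<bar> \<le>
       \<epsilon> * \<bar>exp (\<mu> * t) - exp (\<mu> * t0)\<bar> * (1 + m * sqrt \<sigma>) + \<epsilon> * exp (\<mu> * t0) * m * sqrt \<bar>s - s0\<bar>"
      unfolding eq by linarith
    thus ?thesis unfolding F_def s_def s0_def sf_def .
  qed
  show "\<exists>\<delta>>0. \<forall>t\<in>{0..T}. \<bar>t - t0\<bar> < \<delta> \<longrightarrow> (\<forall>x::real\<ge>0. \<bar>UU \<epsilon> \<mu> m \<sigma> \<tau> x t - UU \<epsilon> \<mu> m \<sigma> \<tau> x t0\<bar> \<le> e)"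
  proof (intro exI[of _ d] conjI ballI impI allI)
    fix t x :: real assume t: "t \<in> {0..T}" "\<bar>t - t0\<bar> < d" and x: "x \<ge> 0"
    show "\<bar>UU \<epsilon> \<mu> m \<sigma> \<tau> x t - UU \<epsilon> \<mu> m \<sigma> \<tau> x t0\<bar> \<le> e"
    proof (cases "t = t0")
      case True thus ?thesis using e by simp
    next
      case False
      thus ?thesis using bound[OF t(1) x] d(2)[OF False t(2)] by linarith
    qed
  qed (use d in auto)
qed

lemma ring_aux: "(A::real) * m * X - c * (A * m * Y) = A * (m * X - c * (m * Y))"
  by (simp add: algebra_simps)

lemma UU_super:
  fixes L c \<sigma> m D \<tau> \<mu> \<epsilon> T :: real and g :: "real \<Rightarrow> real"
  assumes L: "L \<ge> 1" and c: "c \<ge> 0" and \<sigma>: "\<sigma> = 1/(4*L\<^sup>2)" and m: "m = 2*L"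
    and D: "D = 1 + c/(2*L)" and \<tau>: "\<tau> = \<sigma>/(8*D)" and \<mu>: "\<mu> = 8*L\<^sup>2*D"
    and gL: "\<forall>y\<in>{0..1}. g y \<ge> - L * y"
    and \<epsilon>: "\<epsilon> > 0"
    and Tend: "\<epsilon> * exp (\<mu> * T) * (1 + m * sqrt (sf \<sigma> \<tau> T)) \<le> 1"
  shows "super_solution c g (UU \<epsilon> \<mu> m \<sigma> \<tau>) 0 T"
proof -
  have \<sigma>pos: "\<sigma> > 0" using L \<sigma> by simp
  have Dpos: "D \<ge> 1" using D c L by simp
  have \<tau>pos: "\<tau> > 0" using \<sigma>pos Dpos \<tau> by simp
  have \<mu>pos: "\<mu> > 0" using \<mu> Dpos L by simp
  have cont: "continuous_on ({0..} \<times> {0..T}) (\<lambda>(x, t). UU \<epsilon> \<mu> m \<sigma> \<tau> x t)"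
    using UU_cont \<tau>pos by blast
  have main: "(\<forall>x>0.
        (\<forall>y>0. (\<lambda>z. UU \<epsilon> \<mu> m \<sigma> \<tau> z t) differentiable (at y)) \<and>
        deriv (\<lambda>z. UU \<epsilon> \<mu> m \<sigma> \<tau> z t) differentiable (at x) \<and>
        (\<lambda>\<tau>'. UU \<epsilon> \<mu> m \<sigma> \<tau> x \<tau>') differentiable (at t) \<and>
        deriv (\<lambda>\<tau>'. UU \<epsilon> \<mu> m \<sigma> \<tau> x \<tau>') t \<ge>
          deriv (deriv (\<lambda>z. UU \<epsilon> \<mu> m \<sigma> \<tau> z t)) x - c * deriv (\<lambda>z. UU \<epsilon> \<mu> m \<sigma> \<tau> z t) x) \<and>
     (\<exists>d. ((\<lambda>z. UU \<epsilon> \<mu> m \<sigma> \<tau> z t) has_real_derivative d) (at 0 within {0..})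
        \<and> d \<le> g (UU \<epsilon> \<mu> m \<sigma> \<tau> 0 t))" if t: "t \<in> {0<..<T}" for t
  proof -
  define s where "s = sf \<sigma> \<tau> t"
  define A where "A = \<epsilon> * exp (\<mu> * t)"
  have spos: "s > 0" unfolding s_def sf_def using t \<sigma>pos \<tau>pos by simp
  have Apos: "A > 0" unfolding A_def using \<epsilon> by simp
  have f: "(\<lambda>z. UU \<epsilon> \<mu> m \<sigma> \<tau> z t) = (\<lambda>z. A * (1 + m * (sqrt (z\<^sup>2 + s) - z)))"
    by (simp add: fun_eq_iff UU_def A_def s_def)
  have d1: "\<And>z. ((\<lambda>z. UU \<epsilon> \<mu> m \<sigma> \<tau> z t) has_real_derivative A * m * (z / sqrt (z\<^sup>2 + s) - 1)) (at z)"
    unfolding f by (rule dx[OF spos])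
  have df: "deriv (\<lambda>z. UU \<epsilon> \<mu> m \<sigma> \<tau> z t) = (\<lambda>z. A * m * (z / sqrt (z\<^sup>2 + s) - 1))"
    using d1 by (simp add: fun_eq_iff DERIV_imp_deriv)
  have d2: "\<And>z. ((\<lambda>z. A * m * (z / sqrt (z\<^sup>2 + s) - 1)) has_real_derivative A * m * (s / (sqrt (z\<^sup>2 + s))^3)) (at z)"
    by (rule dxx[OF spos])
  have P1: "\<forall>y>0. (\<lambda>z. UU \<epsilon> \<mu> m \<sigma> \<tau> z t) differentiable (at y)"
      using d1 real_differentiable_def by blast
  have P2: "(
        deriv (\<lambda>z. UU \<epsilon> \<mu> m \<sigma> \<tau> z t) differentiable (at x) \<and>
        (\<lambda>\<tau>'. UU \<epsilon> \<mu> m \<sigma> \<tau> x \<tau>') differentiable (at t) \<and>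
        deriv (\<lambda>\<tau>'. UU \<epsilon> \<mu> m \<sigma> \<tau> x \<tau>') t \<ge>
          deriv (deriv (\<lambda>z. UU \<epsilon> \<mu> m \<sigma> \<tau> z t)) x - c * deriv (\<lambda>z. UU \<epsilon> \<mu> m \<sigma> \<tau> z t) x)" if x: "x > 0" for x
  proof (intro conjI)
    show "deriv (\<lambda>z. UU \<epsilon> \<mu> m \<sigma> \<tau> z t) differentiable (at x)"
      unfolding df using d2 real_differentiable_def by blast
    have d3: "((\<lambda>t. UU \<epsilon> \<mu> m \<sigma> \<tau> x t) has_real_derivative
       \<epsilon> * exp (\<mu> * t) * (\<mu> * (1 + m * (sqrt (x\<^sup>2 + sf \<sigma> \<tau> t) - x)) + m * (\<sigma> * \<tau> / (t + \<tau>)\<^sup>2) / (2 * sqrt (x\<^sup>2 + sf \<sigma> \<tau> t)))) (at t)"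
      using t \<tau>pos \<sigma>pos by (intro dt) auto
    show "(\<lambda>\<tau>'. UU \<epsilon> \<mu> m \<sigma> \<tau> x \<tau>') differentiable (at t)"
      using d3 real_differentiable_def by blast
    have e1: "deriv (\<lambda>\<tau>'. UU \<epsilon> \<mu> m \<sigma> \<tau> x \<tau>') t = \<epsilon> * exp (\<mu> * t) * (\<mu> * (1 + m * (sqrt (x\<^sup>2 + sf \<sigma> \<tau> t) - x)) + m * (\<sigma> * \<tau> / (t + \<tau>)\<^sup>2) / (2 * sqrt (x\<^sup>2 + sf \<sigma> \<tau> t)))"
      using d3 by (rule DERIV_imp_deriv)
    have e2: "deriv (deriv (\<lambda>z. UU \<epsilon> \<mu> m \<sigma> \<tau> z t)) x = A * m * (s / (sqrt (x\<^sup>2 + s))^3)"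
      unfolding df using d2 by (rule DERIV_imp_deriv)
    have e3: "deriv (\<lambda>z. UU \<epsilon> \<mu> m \<sigma> \<tau> z t) x = A * m * (x / sqrt (x\<^sup>2 + s) - 1)"
      unfolding df by simp
    have K: "m*(\<sigma>*t/(t+\<tau>)/(sqrt (x\<^sup>2 + \<sigma>*t/(t+\<tau>)))^3) - c*(m*(x/sqrt (x\<^sup>2 + \<sigma>*t/(t+\<tau>)) - 1))
     \<le> \<mu>*(1 + m*(sqrt (x\<^sup>2 + \<sigma>*t/(t+\<tau>)) - x)) + m*(\<sigma>*\<tau>/(t+\<tau>)\<^sup>2)/(2 * sqrt (x\<^sup>2 + \<sigma>*t/(t+\<tau>)))"
      using t x by (intro key_ineq[OF L c \<sigma> m D \<tau> \<mu>]) auto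
    have K2: "m*(s/(sqrt (x\<^sup>2 + s))^3) - c*(m*(x/sqrt (x\<^sup>2 + s) - 1))
       \<le> \<mu>*(1 + m*(sqrt (x\<^sup>2 + s) - x)) + m*(\<sigma>*\<tau>/(t+\<tau>)\<^sup>2)/(2 * sqrt (x\<^sup>2 + s))"
      unfolding s_def sf_def by (rule K)
    have K3: "A * (m*(s/(sqrt (x\<^sup>2 + s))^3) - c*(m*(x/sqrt (x\<^sup>2 + s) - 1)))
       \<le> A * (\<mu>*(1 + m*(sqrt (x\<^sup>2 + s) - x)) + m*(\<sigma>*\<tau>/(t+\<tau>)\<^sup>2)/(2 * sqrt (x\<^sup>2 + s)))"
      by (rule mult_left_mono[OF K2]) (use Apos in simp)
    have E1: "deriv (\<lambda>\<tau>'. UU \<epsilon> \<mu> m \<sigma> \<tau> x \<tau>') t = A * (\<mu>*(1 + m*(sqrt (x\<^sup>2 + s) - x)) + m*(\<sigma>*\<tau>/(t+\<tau>)\<^sup>2)/(2 * sqrt (x\<^sup>2 + s)))"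
      unfolding e1 A_def s_def by simp
    have E2: "deriv (deriv (\<lambda>z. UU \<epsilon> \<mu> m \<sigma> \<tau> z t)) x - c * deriv (\<lambda>z. UU \<epsilon> \<mu> m \<sigma> \<tau> z t) x
       = A * (m*(s/(sqrt (x\<^sup>2 + s))^3) - c*(m*(x/sqrt (x\<^sup>2 + s) - 1)))"
      unfolding e2 e3 by (rule ring_aux)
    show "deriv (\<lambda>\<tau>'. UU \<epsilon> \<mu> m \<sigma> \<tau> x \<tau>') t \<ge>
          deriv (deriv (\<lambda>z. UU \<epsilon> \<mu> m \<sigma> \<tau> z t)) x - c * deriv (\<lambda>z. UU \<epsilon> \<mu> m \<sigma> \<tau> z t) x"
      unfolding E1 E2 by (rule K3)
  qed
  have b: "((\<lambda>z. UU \<epsilon> \<mu> m \<sigma> \<tau> z t) has_real_derivative - (A * m)) (at 0 within {0..})"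
  proof -
    have "A * m * (0 / sqrt (0\<^sup>2 + s) - 1) = - (A * m)" by simp
    thus ?thesis using d1[of 0] has_field_derivative_at_within by metis
  qed
  have u0: "UU \<epsilon> \<mu> m \<sigma> \<tau> 0 t = A * (1 + m * sqrt s)" by (simp add: UU_def A_def s_def)
  have sqs: "sqrt \<sigma> = 1/(2*L)" using L \<sigma> by (simp add: real_sqrt_divide real_sqrt_mult)
  have sle: "s \<le> \<sigma>" unfolding s_def using sf_bounds[of \<sigma> \<tau> t] \<sigma>pos \<tau>pos t by auto
  have "sqrt s \<le> 1/(2*L)" using sle sqs by (metis real_sqrt_le_mono)
  hence ms: "m * sqrt s \<le> 1" using m L by (simp add: field_simps)
  have "sqrt s \<le> sqrt (sf \<sigma> \<tau> T)" unfolding s_def using sf_mono[of \<sigma> \<tau> t T] \<sigma>pos \<tau>pos t by auto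
  moreover have "A \<le> \<epsilon> * exp (\<mu> * T)" unfolding A_def using \<epsilon> \<mu>pos t by simp
  ultimately have "A * (1 + m * sqrt s) \<le> \<epsilon> * exp (\<mu> * T) * (1 + m * sqrt (sf \<sigma> \<tau> T))"
    using Apos m L spos by (intro mult_mono add_left_mono mult_left_mono) auto
  hence u1: "UU \<epsilon> \<mu> m \<sigma> \<tau> 0 t \<le> 1" using Tend u0 by simp
  have u0pos: "UU \<epsilon> \<mu> m \<sigma> \<tau> 0 t \<ge> 0" unfolding u0 using Apos m L spos by simp
  have "g (UU \<epsilon> \<mu> m \<sigma> \<tau> 0 t) \<ge> - L * UU \<epsilon> \<mu> m \<sigma> \<tau> 0 t" using gL u1 u0pos by auto
  moreover have "L * UU \<epsilon> \<mu> m \<sigma> \<tau> 0 t \<le> L * (2 * A)" unfolding u0 using ms Apos L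
    by (intro mult_left_mono) auto
  ultimately have "- (A * m) \<le> g (UU \<epsilon> \<mu> m \<sigma> \<tau> 0 t)" using m by (simp add: algebra_simps)
  hence P3: "\<exists>d. ((\<lambda>z. UU \<epsilon> \<mu> m \<sigma> \<tau> z t) has_real_derivative d) (at 0 within {0..}) \<and> d \<le> g (UU \<epsilon> \<mu> m \<sigma> \<tau> 0 t)"
    using b by blast
  show ?thesis using P1 P2 P3 by simp
  qed
  show ?thesis unfolding super_solution_def using cont main by blast
qed

theorem lemma18:
  fixes c :: real and g :: "real \<Rightarrow> real" and y1 :: real
  assumes "c \<ge> 0"
    and "C2_fun g"
    and "\<forall>y. g (y + 2 * pi) = g y"
    and "y1 > 0" and "g 0 = 0" and "g y1 = 0"
    and "\<forall>y. 0 < y \<and> y < y1 \<longrightarrow> g y < 0"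
  shows "\<exists>(T :: nat \<Rightarrow> real) (u :: nat \<Rightarrow> real \<Rightarrow> real \<Rightarrow> real) (K :: nat).
           (\<forall>k\<ge>K. T k > 0 \<and> in_C_BUC (T k) (u k)
              \<and> (\<forall>x\<ge>0. u k x 0 = 1 / (real k)^2)
              \<and> super_solution c g (u k) 0 (T k)
              \<and> u k 0 (T k) = 1 / real k)
           \<and> filterlim T at_top sequentially"
proof -
  obtain L where L: "L \<ge> 1" and gL: "\<forall>y\<in>{0..1}. g y \<ge> - L * y"
    using g_lower[OF assms(2) assms(5)] by blast
  have c: "c \<ge> 0" by (rule assms(1))
  define \<sigma> where "\<sigma> = 1/(4*L\<^sup>2)"
  define m where "m = 2*L"
  define D where "D = 1 + c/(2*L)"
  define \<tau> where "\<tau> = \<sigma>/(8*D)"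
  define \<mu> where "\<mu> = 8*L\<^sup>2*D"
  have \<sigma>pos: "\<sigma> > 0" using L \<sigma>_def by simp
  have Dpos: "D \<ge> 1" using D_def c L by simp
  have \<tau>pos: "\<tau> > 0" using \<sigma>pos Dpos \<tau>_def by simp
  have \<mu>pos: "\<mu> > 0" using \<mu>_def Dpos L by simp
  have mpos: "m > 0" using m_def L by simp
  define \<phi> where "\<phi> = (\<lambda>t. exp (\<mu> * t) * (1 + m * sqrt (sf \<sigma> \<tau> t)))"
  have sqs: "sqrt \<sigma> = 1/(2*L)" using L \<sigma>_def by (simp add: real_sqrt_divide real_sqrt_mult)
  have phi_le: "\<phi> t \<le> 2 * exp (\<mu> * t)" if "t \<ge> 0" for t
  proof -
    have "sf \<sigma> \<tau> t \<le> \<sigma>" using sf_bounds[of \<sigma> \<tau> t] \<sigma>pos \<tau>pos that by auto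
    hence "sqrt (sf \<sigma> \<tau> t) \<le> 1/(2*L)" using sqs by (metis real_sqrt_le_mono)
    hence "m * sqrt (sf \<sigma> \<tau> t) \<le> 1" using m_def L by (simp add: field_simps)
    thus ?thesis unfolding \<phi>_def by simp
  qed
  have phi_ge: "\<phi> t \<ge> exp (\<mu> * t)" if "t \<ge> 0" for t
  proof -
    have "sf \<sigma> \<tau> t \<ge> 0" using sf_bounds[of \<sigma> \<tau> t] \<sigma>pos \<tau>pos that by auto
    thus ?thesis unfolding \<phi>_def using mpos by simp
  qed
  have phi0: "\<phi> 0 = 1" unfolding \<phi>_def sf_def by simp
  have ex: "\<exists>T>0. \<phi> T = real k" if k: "k \<ge> 2" for k :: nat
  proof -
    define b where "b = ln (real k) / \<mu>"
    have bpos: "b \<ge> 0" unfolding b_def using k \<mu>pos by simp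
    have "\<phi> b \<ge> exp (\<mu> * b)" using phi_ge bpos by simp
    also have "exp (\<mu> * b) = real k" unfolding b_def using \<mu>pos k by simp
    finally have hb: "real k \<le> \<phi> b" .
    have "\<forall>t. 0 \<le> t \<and> t \<le> b \<longrightarrow> isCont \<phi> t"
      unfolding \<phi>_def sf_def using \<tau>pos by (auto intro!: continuous_intros simp: add_nonneg_pos)
    then obtain T where T: "0 \<le> T" "T \<le> b" "\<phi> T = real k"
      using IVT[of \<phi> 0 "real k" b] phi0 k hb bpos by auto
    have "T \<noteq> 0" using T phi0 k by auto
    hence "T > 0" using T(1) by linarith
    thus ?thesis using T(3) by blast
  qed
  define Tf where "Tf = (\<lambda>k::nat. SOME T. T > 0 \<and> \<phi> T = real k)"
  have Tf: "Tf k > 0 \<and> \<phi> (Tf k) = real k" if "k \<ge> 2" for k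
    unfolding Tf_def using someI_ex[OF ex[OF that]] .
  define u where "u = (\<lambda>k::nat. UU (1/(real k)^2) \<mu> m \<sigma> \<tau>)"
  have part1: "\<forall>k\<ge>2. Tf k > 0 \<and> in_C_BUC (Tf k) (u k)
              \<and> (\<forall>x\<ge>0. u k x 0 = 1 / (real k)^2)
              \<and> super_solution c g (u k) 0 (Tf k)
              \<and> u k 0 (Tf k) = 1 / real k"
  proof (intro allI impI conjI)
    fix k :: nat assume k: "k \<ge> 2"
    have \<epsilon>: "1/(real k)^2 > 0" using k by simp
    show "Tf k > 0" using Tf[OF k] by simp
    show "in_C_BUC (Tf k) (u k)" unfolding u_def using UU_BUC \<epsilon> mpos \<sigma>pos \<tau>pos by blast
    show "u k x 0 = 1 / (real k)^2" if "x \<ge> 0" for x unfolding u_def UU_def sf_def using that by simp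
    have e: "1/(real k)^2 * exp (\<mu> * Tf k) * (1 + m * sqrt (sf \<sigma> \<tau> (Tf k))) = 1 / real k"
      using Tf[OF k] k unfolding \<phi>_def by (simp add: power2_eq_square mult.assoc)
    show "u k 0 (Tf k) = 1 / real k" unfolding u_def UU_def using e by (simp add: mult.assoc)
    have "1 / real k \<le> 1" using k by simp
    hence e2: "1/(real k)^2 * exp (\<mu> * Tf k) * (1 + m * sqrt (sf \<sigma> \<tau> (Tf k))) \<le> 1" using e by linarith
    show "super_solution c g (u k) 0 (Tf k)" unfolding u_def
      by (rule UU_super[OF L c \<sigma>_def m_def D_def \<tau>_def \<mu>_def gL \<epsilon> e2])
  qed
  have part2: "filterlim Tf at_top sequentially"
    unfolding filterlim_at_top
  proof
    fix Z :: real
    define N where "N = nat \<lceil>2 * exp (\<mu> * Z)\<rceil> + 2"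
    have "Z \<le> Tf k" if k: "k \<ge> N" for k
    proof -
      have k2: "k \<ge> 2" using k N_def by simp
      have "real k \<ge> 2 * exp (\<mu> * Z) + 1"
      proof -
        have "real N \<ge> 2 * exp (\<mu> * Z) + 2" unfolding N_def by linarith
        thus ?thesis using k by linarith
      qed
      moreover have "real k \<le> 2 * exp (\<mu> * Tf k)" using Tf[OF k2] phi_le[of "Tf k"] by simp
      ultimately have "exp (\<mu> * Z) < exp (\<mu> * Tf k)" by linarith
      hence "\<mu> * Z < \<mu> * Tf k" by simp
      thus ?thesis using \<mu>pos by simp
    qed
    thus "eventually (\<lambda>k. Z \<le> Tf k) sequentially" unfolding eventually_sequentially by blast
  qed
  show ?thesis using part1 part2 by blast
qed
end
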